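(* For $k\in\{0,1,2\}$ let $U_k=\begin{pmatrix}\cos(2k\pi/3)&-\sin(2k\pi/3)\\ \sin(2k\pi/3)&\cos(2k\pi/3)\end{pmatrix}$, let $|+\rangle=(1,0)$, $|-\rangle=(0,1)$. For $\lambda\in(0,1)$ define the POVM $\mathsf E^\lambda$ by $E^\lambda_k=\lambda\,\tfrac23U_k|+\rangle\langle+|U_k^*+(1-\lambda)\tfrac13\mathbb 1$, and for $\eta\in[0,1]$ define $\mathsf B^\eta$ by $B^\eta_k=U_kB^\eta_0U_k^*$ with $B^\eta_0=\eta\,\tfrac23|-\rangle\langle-|+(1-\eta)\tfrac13\mathbb 1$. If $$\eta\le \frac{\lambda^2}{2\left(1-\sqrt{1-\lambda^2}\right)},$$ then $\mathsf E^\lambda$ and $\mathsf B^\eta$ are jointly measurable. In particular, for $\eta=\lambda$ they are jointly measurable whenever $\lambda\le 4/5$.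
   Context: Two POVMs $(E_k)_{k=0}^2$, $(B_j)_{j=0}^2$ on $\mathbb C^2$ are jointly measurable if there is a POVM $(N_{kj})$ with $\sum_jN_{kj}=E_k$ and $\sum_kN_{kj}=B_j$. *)

theory Defs
  imports "HOL-Analysis.Analysis"
begin

type_synonym cmat2 = "complex ^ 2 ^ 2"
type_synonym cvec2 = "complex ^ 2"

definition adj :: "cmat2 \<Rightarrow> cmat2" where
  "adj A = (\<chi> i j. cnj (A $ j $ i))"

definition qform :: "cmat2 \<Rightarrow> cvec2 \<Rightarrow> complex" where
  "qform A v = (\<Sum>i\<in>UNIV. \<Sum>j\<in>UNIV. cnj (v $ i) * A $ i $ j * v $ j)"

definition psd :: "cmat2 \<Rightarrow> bool" where
  "psd A \<longleftrightarrow> adj A = A \<and> (\<forall>v. Im (qform A v) = 0 \<and> 0 \<le> Re (qform A v))"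

definition ketbra :: "cvec2 \<Rightarrow> cmat2" where
  "ketbra v = (\<chi> i j. v $ i * cnj (v $ j))"

definition ket_plus :: cvec2 where "ket_plus = vector [1, 0]"
definition ket_minus :: cvec2 where "ket_minus = vector [0, 1]"

definition rotU :: "nat \<Rightarrow> cmat2" where
  "rotU k = (let t = 2 * real k * pi / 3 in
     vector [vector [complex_of_real (cos t), complex_of_real (- sin t)],
             vector [complex_of_real (sin t), complex_of_real (cos t)]])"

definition povm3 :: "(nat \<Rightarrow> cmat2) \<Rightarrow> bool" where
  "povm3 E \<longleftrightarrow> (\<forall>k<3. psd (E k)) \<and> (\<Sum>k<3. E k) = mat 1"

definition jointly_measurable3 :: "(nat \<Rightarrow> cmat2) \<Rightarrow> (nat \<Rightarrow> cmat2) \<Rightarrow> bool" where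
  "jointly_measurable3 E B \<longleftrightarrow>
     (\<exists>N :: nat \<Rightarrow> nat \<Rightarrow> cmat2.
        (\<forall>k<3. \<forall>j<3. psd (N k j)) \<and> (\<Sum>k<3. \<Sum>j<3. N k j) = mat 1 \<and>
        (\<forall>k<3. (\<Sum>j<3. N k j) = E k) \<and> (\<forall>j<3. (\<Sum>k<3. N k j) = B j))"

definition povmE :: "real \<Rightarrow> nat \<Rightarrow> cmat2" where
  "povmE l k = (l * (2/3)) *\<^sub>R (rotU k ** ketbra ket_plus ** adj (rotU k))
               + ((1 - l) * (1/3)) *\<^sub>R mat 1"

definition povmB0 :: "real \<Rightarrow> cmat2" where
  "povmB0 e = (e * (2/3)) *\<^sub>R ketbra ket_minus + ((1 - e) * (1/3)) *\<^sub>R mat 1"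

definition povmB :: "real \<Rightarrow> nat \<Rightarrow> cmat2" where
  "povmB e k = rotU k ** povmB0 e ** adj (rotU k)"

end

theory Submission
  imports Defs
begin

definition Mx :: "real \<Rightarrow> real \<Rightarrow> real \<Rightarrow> cmat2" where
 "Mx a z x = vector [vector [complex_of_real (a+z), complex_of_real x],
                     vector [complex_of_real x, complex_of_real (a-z)]]"

definition mz :: "nat \<Rightarrow> real" where "mz k = (if k = 0 then 1 else -1/2)"
definition mxx :: "nat \<Rightarrow> real" where "mxx k = (if k = 0 then 0 else if k = 1 then - sqrt 3/2 else sqrt 3/2)"

lemma cs2: "cos (2 * real 2 * pi / 3) = -1/2" "sin (2 * real 2 * pi / 3) = - sqrt 3/2"
proof -
  have e: "2 * real 2 * pi / 3 = pi/3 + pi" by simp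
  have "cos (2 * real 2 * pi / 3) = cos (pi/3 + pi)" by (simp only: e)
  also have "\<dots> = -1/2" by (simp only: cos_periodic_pi cos_60)
  finally show "cos (2 * real 2 * pi / 3) = -1/2" .
  have "sin (2 * real 2 * pi / 3) = sin (pi/3 + pi)" by (simp only: e)
  also have "\<dots> = - sqrt 3/2" by (simp only: sin_periodic_pi sin_60)
  finally show "sin (2 * real 2 * pi / 3) = - sqrt 3/2" .
qed

lemma cs1: "cos (2 * real 1 * pi / 3) = -1/2" "sin (2 * real 1 * pi / 3) = sqrt 3/2"
  using cos_120 sin_120 by simp_all

lemma Mx_add: "Mx a z x + Mx a' z' x' = Mx (a+a') (z+z') (x+x')"
  by (simp add: Mx_def vec_eq_iff forall_2 algebra_simps)

lemma Mx_scale: "c *\<^sub>R Mx a z x = Mx (c*a) (c*z) (c*x)"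
  apply (simp add: Mx_def vec_eq_iff forall_2 algebra_simps)
  by (simp add: scaleR_conv_of_real algebra_simps)

lemma Mx_one: "mat 1 = Mx 1 0 0"
  by (simp add: Mx_def vec_eq_iff forall_2 mat_def)

lemma Mx_cong: "a = a' \<Longrightarrow> z = z' \<Longrightarrow> x = x' \<Longrightarrow> Mx a z x = Mx a' z' x'" by simp

lemma P_Mx: "k < 3 \<Longrightarrow> rotU k ** ketbra ket_plus ** adj (rotU k) = Mx (1/2) (mz k/2) (mxx k/2)"
proof -
  assume "k < 3"
  then have "k = 0 \<or> k = 1 \<or> k = 2" by auto
  then show ?thesis
  proof (elim disjE)
    assume k: "k = 0"
    show ?thesis unfolding k rotU_def ketbra_def adj_def ket_plus_def Mx_def mz_def mxx_def
      by (simp add: vec_eq_iff forall_2 matrix_matrix_mult_def sum_2)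
  next
    assume k: "k = 1"
    show ?thesis unfolding k rotU_def ketbra_def adj_def ket_plus_def Mx_def mz_def mxx_def Let_def cs1
      by (simp add: vec_eq_iff forall_2 matrix_matrix_mult_def sum_2 field_simps flip: of_real_mult)
  next
    assume k: "k = 2"
    show ?thesis unfolding k rotU_def ketbra_def adj_def ket_plus_def Mx_def mz_def mxx_def Let_def cs2
      by (simp add: vec_eq_iff forall_2 matrix_matrix_mult_def sum_2 field_simps flip: of_real_mult)
  qed
qed

lemma E_Mx: "k < 3 \<Longrightarrow> povmE l k = Mx (1/3) (l/3 * mz k) (l/3 * mxx k)"
  unfolding povmE_def by (simp add: P_Mx Mx_scale Mx_one Mx_add field_simps)

lemma B_Mx: "k < 3 \<Longrightarrow> povmB e k = Mx (1/3) (-e/3 * mz k) (-e/3 * mxx k)"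
proof -
  have B0: "povmB0 e = Mx (1/3) (-e/3) 0"
  proof -
    have "ketbra ket_minus = Mx (1/2) (-1/2) 0"
      by (simp add: ketbra_def ket_minus_def Mx_def vec_eq_iff forall_2)
    then show ?thesis unfolding povmB0_def by (simp add: Mx_one Mx_scale Mx_add field_simps)
  qed
  assume "k < 3"
  then have "k = 0 \<or> k = 1 \<or> k = 2" by auto
  then show ?thesis
  proof (elim disjE)
    assume k: "k = 0"
    show ?thesis unfolding k povmB_def B0 rotU_def adj_def Mx_def mz_def mxx_def
      by (simp add: vec_eq_iff forall_2 matrix_matrix_mult_def sum_2)
  next
    assume k: "k = 1"
    show ?thesis unfolding k povmB_def B0 rotU_def adj_def Mx_def mz_def mxx_def Let_def cs1
      by (simp add: vec_eq_iff forall_2 matrix_matrix_mult_def sum_2 field_simps flip: of_real_mult)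
  next
    assume k: "k = 2"
    show ?thesis unfolding k povmB_def B0 rotU_def adj_def Mx_def mz_def mxx_def Let_def cs2
      by (simp add: vec_eq_iff forall_2 matrix_matrix_mult_def sum_2 field_simps flip: of_real_mult)
  qed
qed

lemma quad_nonneg:
  fixes A B C p r :: real
  assumes "A \<ge> 0" "C \<ge> 0" "B^2 \<le> A*C"
  shows "A*p^2 + 2*B*p*r + C*r^2 \<ge> 0"
proof (cases "A = 0")
  case True
  then have "B^2 \<le> 0" using assms by simp
  then have "B = 0" by (smt (verit) zero_le_power2 zero_eq_power2)
  then show ?thesis using True assms by simp
next
  case False
  then have "A > 0" using assms by simp
  have "A*(A*p^2 + 2*B*p*r + C*r^2) = (A*p+B*r)^2 + (A*C-B^2)*r^2"
    by (simp add: power2_eq_square algebra_simps)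
  also have "\<dots> \<ge> 0" using assms by simp
  finally show ?thesis using \<open>A > 0\<close> by (simp add: zero_le_mult_iff)
qed

lemma psd_Mx:
  assumes "0 \<le> a" "z^2 + x^2 \<le> a^2"
  shows "psd (Mx a z x)"
proof -
  have h1: "a + z \<ge> 0" "a - z \<ge> 0"
    using assms by (smt (verit) abs_le_square_iff abs_le_D1 abs_le_D2 real_sqrt_abs real_sqrt_le_mono le_add_same_cancel1 zero_le_power2)+
  have h2: "x^2 \<le> (a+z)*(a-z)" using assms by (simp add: power2_eq_square algebra_simps)
  have adj: "adj (Mx a z x) = Mx a z x"
    by (simp add: adj_def Mx_def vec_eq_iff forall_2)
  have q: "\<And>v. Im (qform (Mx a z x) v) = 0 \<and> 0 \<le> Re (qform (Mx a z x) v)"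
  proof -
    fix v :: cvec2
    define p where "p = Re (v$1)"
    define q where "q = Im (v$1)"
    define r where "r = Re (v$2)"
    define w where "w = Im (v$2)"
    have Re: "Re (qform (Mx a z x) v) = ((a+z)*p^2 + 2*x*p*r + (a-z)*r^2) + ((a+z)*q^2 + 2*x*q*w + (a-z)*w^2)"
      by (simp add: qform_def sum_2 Mx_def p_def q_def r_def w_def power2_eq_square algebra_simps)
    have Im: "Im (qform (Mx a z x) v) = 0"
      by (simp add: qform_def sum_2 Mx_def algebra_simps)
    show "Im (qform (Mx a z x) v) = 0 \<and> 0 \<le> Re (qform (Mx a z x) v)"
      unfolding Re using Im quad_nonneg[OF h1 h2] by (simp add: add_nonneg_nonneg)
  qed
  show ?thesis unfolding psd_def using adj q by blast
qed

lemma S3: "(\<Sum>j<3. f j) = f 0 + f 1 + f (2::nat)"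
  by (simp add: numeral_3_eq_3 numeral_2_eq_2)

lemma joint:
  fixes l e R :: real
  assumes R1: "\<bar>R\<bar> \<le> 1" and ineq: "(l-e-2*R)^2 + (l+e)^2/3 \<le> (1-\<bar>R\<bar>)^2"
  shows "jointly_measurable3 (povmE l) (povmB e)"
proof -
  define s where "s = (2*l-e-3*R)/9"
  define t where "t = (l-2*e-3*R)/9"
  define N where "N = (\<lambda>k j::nat. if k = j then Mx (\<bar>R\<bar>/3) (R/3 * mz k) (R/3 * mxx k)
      else Mx ((1-\<bar>R\<bar>)/6) (s * mz k + t * mz j) (s * mxx k + t * mxx j))"
  have st: "s^2 + t^2 - s*t \<le> ((1-\<bar>R\<bar>)/6)^2"
  proof -
    have "s^2 + t^2 - s*t = ((l-e-2*R)^2 + (l+e)^2/3)/36"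
      unfolding s_def t_def by (simp add: power2_eq_square field_simps)
    also have "\<dots> \<le> (1-\<bar>R\<bar>)^2/36" using ineq by simp
    finally show ?thesis by (simp add: power_divide)
  qed
  have s3: "sqrt 3 ^ 2 = (3::real)" by simp
  have psdN: "\<forall>k<3. \<forall>j<3. psd (N k j)"
  proof (intro allI impI)
    fix k j :: nat assume k: "k < 3" and j: "j < 3"
    show "psd (N k j)"
    proof (cases "k = j")
      case True
      have "(R/3 * mz k)^2 + (R/3 * mxx k)^2 = (\<bar>R\<bar>/3)^2"
        using k by (auto simp: mz_def mxx_def power2_eq_square field_simps)
      then show ?thesis using True by (simp add: N_def psd_Mx)
    next
      case False
      have "(s * mz k + t * mz j)^2 + (s * mxx k + t * mxx j)^2 = s^2 + t^2 - s*t"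
        using k j False
        by (auto simp: mz_def mxx_def power2_eq_square algebra_simps less_Suc_eq numeral_3_eq_3)
      then show ?thesis using False st R1 by (simp add: N_def psd_Mx)
    qed
  qed
  have rowE: "\<forall>k<3. (\<Sum>j<3. N k j) = povmE l k"
  proof (intro allI impI)
    fix k :: nat assume k: "k < 3"
    then have "k = 0 \<or> k = 1 \<or> k = 2" by auto
    then show "(\<Sum>j<3. N k j) = povmE l k"
      using k by (auto simp: S3 N_def Mx_add E_Mx mz_def mxx_def s_def t_def intro!: Mx_cong; simp add: field_simps)
  qed
  have colB: "\<forall>j<3. (\<Sum>k<3. N k j) = povmB e j"
  proof (intro allI impI)
    fix j :: nat assume j: "j < 3"
    then have "j = 0 \<or> j = 1 \<or> j = 2" by auto
    then show "(\<Sum>k<3. N k j) = povmB e j"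
      using j by (auto simp: S3 N_def Mx_add B_Mx mz_def mxx_def s_def t_def intro!: Mx_cong; simp add: field_simps)
  qed
  have tot: "(\<Sum>k<3. \<Sum>j<3. N k j) = mat 1"
  proof -
    have "(\<Sum>k<3. \<Sum>j<3. N k j) = (\<Sum>k<3. povmE l k)"
      using rowE by (intro sum.cong) auto
    also have "\<dots> = mat 1"
      by (simp add: S3 E_Mx Mx_add Mx_one mz_def mxx_def)
    finally show ?thesis .
  qed
  show ?thesis unfolding jointly_measurable3_def
    using psdN tot rowE colB by blast
qed

lemma key_ineq:
  fixes l e s :: real
  assumes "0 < l" "l < 1" "0 \<le> e" "e \<le> 1" "0 \<le> s" "s \<le> 1" "s^2 = 1 - l^2"
    "2*e \<le> 1 + s" "\<bar>l - e\<bar> < 1/2"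
  shows "(l-e)^2 + (l+e)^2/3 \<le> 1"
proof -
  have main: "(2*e-l)^2 \<le> 3* s^2"
  proof (cases "2*e - l \<ge> 0")
    case False
    have "(2*e-l)^2 = (l-2*e)^2" by (simp add: power2_eq_square algebra_simps)
    also have "\<dots> \<le> (1-l)^2"
      using False assms by (intro power_mono) auto
    also have "\<dots> \<le> 3* s^2"
    proof -
      have a: "l*l \<le> l*1" using assms by (intro mult_left_mono) auto
      have b: "(1-l)^2 = 1 - 2*l + l*l" by (simp add: power2_eq_square algebra_simps)
      have c: "3* s^2 = 3 - 3*(l*l)" using assms by (simp add: power2_eq_square)
      show ?thesis unfolding b c using a assms by linarith
    qed
    finally show ?thesis .
  next
    case True
    show ?thesis
    proof (cases "l \<le> 1/2")
      case True2: True
      have "(2*e-l)^2 \<le> (l+1)^2"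
        using True assms(9) by (intro power_mono) arith+
      also have "\<dots> \<le> 3* s^2"
      proof -
        have a: "l*l \<le> l*(1/2)" using assms True2 by (intro mult_left_mono) auto
        have b: "(l+1)^2 = 1 + 2*l + l*l" by (simp add: power2_eq_square algebra_simps)
        have c: "3* s^2 = 3 - 3*(l*l)" using assms by (simp add: power2_eq_square)
        show ?thesis unfolding b c using a assms True2 by linarith
      qed
      finally show ?thesis .
    next
      case False
      have "(2*e-l)^2 \<le> (1+s-l)^2"
        using True assms by (intro power_mono) auto
      also have "\<dots> \<le> 3* s^2"
      proof -
        define u where "u = 1 - l"
        have u: "0 < u" "u < 1/2" using False assms by (auto simp: u_def)
        have su: "s^2 = u*(2-u)" using assms by (simp add: u_def power2_eq_square algebra_simps)
        have "3*u + 2* s \<le> 4" using u assms by linarith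
        then have "u*(3*u + 2* s) \<le> u*4" using u by (intro mult_left_mono) auto
        then have "(u+s)^2 \<le> 3* s^2" using su by (simp add: power2_eq_square algebra_simps)
        then show ?thesis by (simp add: u_def algebra_simps)
      qed
      finally show ?thesis .
    qed
  qed
  have "(l-e)^2 + (l+e)^2/3 = ((2*e-l)^2 + 3*l^2)/3"
    by (simp add: power2_eq_square field_simps)
  also have "\<dots> \<le> (3* s^2 + 3*l^2)/3" using main by simp
  also have "\<dots> = 1" using assms by simp
  finally show ?thesis .
qed

theorem mainTheorem5:
  shows "(\<forall>l e. 0 < l \<and> l < 1 \<and> 0 \<le> e \<and> e \<le> 1 \<and>
            e \<le> l^2 / (2 * (1 - sqrt (1 - l^2)))
            \<longrightarrow> jointly_measurable3 (povmE l) (povmB e))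
       \<and> (\<forall>l. 0 < l \<and> l < 1 \<and> l \<le> 4/5
            \<longrightarrow> jointly_measurable3 (povmE l) (povmB l))"
proof (intro conjI allI impI)
  fix l e :: real
  assume H: "0 < l \<and> l < 1 \<and> 0 \<le> e \<and> e \<le> 1 \<and> e \<le> l^2 / (2 * (1 - sqrt (1 - l^2)))"
  then have l0: "0 < l" and l1: "l < 1" and e0: "0 \<le> e" and e1: "e \<le> 1"
    and eb: "e \<le> l^2 / (2 * (1 - sqrt (1 - l^2)))" by auto
  show "jointly_measurable3 (povmE l) (povmB e)"
  proof (cases "e \<ge> l + 1/2")
    case True
    define R where "R = -(2*e-2*l-1)/3"
    have aR: "\<bar>R\<bar> = (2*e-2*l-1)/3" using True by (simp add: R_def)
    show ?thesis
    proof (rule joint[where R = R])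
      show "\<bar>R\<bar> \<le> 1" using aR e1 l0 by simp
      have "(1-\<bar>R\<bar>)^2 - ((l-e-2*R)^2 + (l+e)^2/3) = (2-2*e)*(2+2*l)/3"
        unfolding aR unfolding R_def by (simp add: power2_eq_square field_simps)
      also have "\<dots> \<ge> 0" using e1 l0 by simp
      finally show "(l-e-2*R)^2 + (l+e)^2/3 \<le> (1-\<bar>R\<bar>)^2" by simp
    qed
  next
    case False1: False
    show ?thesis
    proof (cases "l \<ge> e + 1/2")
      case True
      define R where "R = (2*l-2*e-1)/3"
      have aR: "\<bar>R\<bar> = (2*l-2*e-1)/3" using True by (simp add: R_def)
      show ?thesis
      proof (rule joint[where R = R])
        show "\<bar>R\<bar> \<le> 1" using aR e0 l1 by simp
        have "(1-\<bar>R\<bar>)^2 - ((l-e-2*R)^2 + (l+e)^2/3) = (2-2*l)*(2+2*e)/3"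
          unfolding aR unfolding R_def by (simp add: power2_eq_square field_simps)
        also have "\<dots> \<ge> 0" using e0 l1 by simp
        finally show "(l-e-2*R)^2 + (l+e)^2/3 \<le> (1-\<bar>R\<bar>)^2" by simp
      qed
    next
      case False
      define s where "s = sqrt (1 - l^2)"
      have l2: "l^2 < 1" using l0 l1 by (simp add: power_less_one_iff abs_less_iff)
      have s0: "0 \<le> s" unfolding s_def using l2 by simp
      have ss: "s^2 = 1 - l^2" unfolding s_def using l2 by simp
      have s1: "s < 1" unfolding s_def using l0 l2 by (simp add: real_sqrt_less_iff)
      have X: "l^2 / (2 * (1 - s)) = (1+s)/2"
      proof -
        have "l^2 = (1-s)*(1+s)" using ss by (simp add: power2_eq_square algebra_simps)
        then show ?thesis using s1 by (simp add: field_simps)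
      qed
      have eb': "e \<le> l^2 / (2 * (1 - s))" using eb by (simp add: s_def)
      have "e \<le> (1 + s)/2" using eb'[unfolded X] .
      then have "2*e \<le> 1 + s" by simp
      moreover have "\<bar>l - e\<bar> < 1/2" using False False1 by arith
      ultimately have "(l-e)^2 + (l+e)^2/3 \<le> 1"
        using key_ineq[OF l0 l1 e0 e1 s0 _ ss] s1 by simp
      then have "(l-e-2*0)^2 + (l+e)^2/3 \<le> (1-\<bar>0::real\<bar>)^2" by simp
      then show ?thesis by (rule joint[rotated]) simp
    qed
  qed
next
  fix l :: real
  assume H: "0 < l \<and> l < 1 \<and> l \<le> 4/5"
  have "l^2 \<le> (4/5)^2" using H by (intro power_mono) auto
  then have "(l-l-2*0)^2 + (l+l)^2/3 \<le> (1-\<bar>0::real\<bar>)^2"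
    by (simp add: power2_eq_square algebra_simps)
  then show "jointly_measurable3 (povmE l) (povmB l)" by (rule joint[rotated]) simp
qed

end
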